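(* Let $R$ be a compact Hausdorff topological semiring and let $A$ be a closed ideal of $R$. Then the relation $\kappa_A=\{(x,y)\in R\times R\mid \exists a,b\in A:\ x+a=y+b\}$ is closed in $R\times R$.
   Context: A semiring is an algebra $(R,+,\cdot,0)$ such that $(R,+,0)$ is a commutative monoid, $(R,\cdot)$ is a semigroup (no multiplicative identity is required), multiplication distributes over addition on both sides, and $0\cdot x = x\cdot 0 = 0$ for all $x\in R$. A topological semiring is a semiring with a topology in which addition and multiplication are continuous. An ideal of $R$ is a submonoid $A$ of $(R,+,0)$ with $RA\cup AR\subseteq A$. *)

theory Defs
  imports "HOL-Analysis.Analysis"
begin

definition topological_semiring :: "('a::{semiring_0, topological_space}) itself \<Rightarrow> bool" where
  "topological_semiring _ \<longleftrightarrow>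
     continuous_on UNIV (\<lambda>p::'a \<times> 'a. fst p + snd p) \<and>
     continuous_on UNIV (\<lambda>p::'a \<times> 'a. fst p * snd p)"

definition semiring_ideal :: "('a::semiring_0) set \<Rightarrow> bool" where
  "semiring_ideal A \<longleftrightarrow>
     0 \<in> A \<and> (\<forall>a\<in>A. \<forall>b\<in>A. a + b \<in> A) \<and>
     (\<forall>r a. a \<in> A \<longrightarrow> r * a \<in> A \<and> a * r \<in> A)"

definition kappa :: "('a::semiring_0) set \<Rightarrow> ('a \<times> 'a) set" where
  "kappa A = {(x, y). \<exists>a\<in>A. \<exists>b\<in>A. x + a = y + b}"

end

theory Submission
  imports Defs
begin

theorem lemma3p2:
  fixes A :: "('a::{semiring_0, t2_space}) set"
  assumes "topological_semiring TYPE('a)"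
    and "compact (UNIV :: 'a set)"
    and "semiring_ideal A"
    and "closed A"
  shows "closed (kappa A)"
proof -
  have add: "continuous_on UNIV (\<lambda>p::'a \<times> 'a. fst p + snd p)"
    using assms(1) unfolding topological_semiring_def by blast
  define f where "f = (\<lambda>p::('a\<times>'a)\<times>('a\<times>'a). fst (fst p) + fst (snd p))"
  define g where "g = (\<lambda>p::('a\<times>'a)\<times>('a\<times>'a). snd (fst p) + snd (snd p))"
  have cf: "continuous_on UNIV f"
  proof -
    have "continuous_on UNIV (\<lambda>p::('a\<times>'a)\<times>('a\<times>'a). (fst (fst p), fst (snd p)))"
      by (intro continuous_intros)
    from continuous_on_compose[OF this continuous_on_subset[OF add]]
    show ?thesis unfolding f_def o_def by simp
  qed
  have cg: "continuous_on UNIV g"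
  proof -
    have "continuous_on UNIV (\<lambda>p::('a\<times>'a)\<times>('a\<times>'a). (snd (fst p), snd (snd p)))"
      by (intro continuous_intros)
    from continuous_on_compose[OF this continuous_on_subset[OF add]]
    show ?thesis unfolding g_def o_def by simp
  qed
  define S where "S = (UNIV \<times> (A \<times> A)) \<inter> {p. f p = g p}"
  have "closed {p. f p = g p}"
    using cf cg by (intro closed_Collect_eq) (auto intro: continuous_on_subset)
  moreover have "closed (UNIV \<times> (A \<times> A) :: (('a\<times>'a)\<times>('a\<times>'a)) set)"
    using assms(4) by (intro closed_Times) auto
  ultimately have "closed S" unfolding S_def by auto
  moreover have "compact (UNIV :: (('a\<times>'a)\<times>('a\<times>'a)) set)"
    using assms(2) compact_Times[of "UNIV::'a set" "UNIV::'a set"]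
      compact_Times[of "UNIV::('a\<times>'a) set" "UNIV::('a\<times>'a) set"] by simp
  ultimately have "compact S" using closed_Int_compact[of S UNIV] by simp
  hence "compact (fst ` S)" by (intro compact_continuous_image continuous_intros)
  moreover have "fst ` S = kappa A"
    unfolding S_def kappa_def f_def g_def apply (auto simp: image_iff)
    apply blast
   apply (rule_tac x="((a,b),(aa,ba))" in bexI) by auto
  ultimately show ?thesis using compact_imp_closed by metis
qed

end
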